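(* Let $n_1,n_1',n_2,n_2'\in\mathbb{N}$. For $i=1,2$ let $\phi_i:\mathbb{N}^{n_i}\to\mathbb{N}^{n_i'}$ be monotonic maps that change the Stanley depth by $\ell_i$ with respect to $g_i\in\mathbb{N}^{n_i}$ and $g_i'\in\mathbb{N}^{n_i'}$. Then the product map $(\phi_1,\phi_2):\mathbb{N}^{n_1+n_2}\to\mathbb{N}^{n_1'+n_2'}$, $(a,b)\mapsto(\phi_1(a),\phi_2(b))$, changes the Stanley depth by $\ell_1+\ell_2$ with respect to $(g_1,g_2)$ and $(g_1',g_2')$.
   Context: $\mathbb{N}^n$ carries the componentwise partial order; $[a,b]=\{c: a\le c\le b\}$; a map is monotonic if it preserves this order. A monotonic map $\phi:\mathbb{N}^n\to\mathbb{N}^{n'}$ changes the Stanley depth by $\ell\in\mathbb{Z}$ with respect to $g\in\mathbb{N}^n$ and $g'\in\mathbb{N}^{n'}$ if (1) $\phi(g)\le g'$, and (2) for every interval $[a',b']\subset[0,g']$, the set $\phi^{-1}([a',b'])\cap[0,g]$ is a finite disjoint union $\bigcup_i[a^i,b^i]$ of intervals with $\#\{j\in[n]: b^i_j=g_j\}\ge\#\{j\in[n']: b'_j=g'_j\}+\ell$ for all $i$. *)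

theory Defs
  imports Main
begin

text \<open>Elements of \<open>\<nat>^n\<close> are represented as lists of naturals of length n.
  The componentwise order is \<open>list_all2 (\<le>)\<close>.\<close>

definition vle :: "nat list \<Rightarrow> nat list \<Rightarrow> bool" where
  "vle a b \<longleftrightarrow> list_all2 (\<le>) a b"

definition intv :: "nat \<Rightarrow> nat list \<Rightarrow> nat list \<Rightarrow> nat list set" where
  "intv n a b = {c. length c = n \<and> vle a c \<and> vle c b}"

definition zerov :: "nat \<Rightarrow> nat list" where
  "zerov n = replicate n 0"

definition mono_map :: "nat \<Rightarrow> nat \<Rightarrow> (nat list \<Rightarrow> nat list) \<Rightarrow> bool" where
  "mono_map n n' \<phi> \<longleftrightarrow>
     (\<forall>a. length a = n \<longrightarrow> length (\<phi> a) = n') \<and>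
     (\<forall>a b. length a = n \<longrightarrow> length b = n \<longrightarrow> vle a b \<longrightarrow> vle (\<phi> a) (\<phi> b))"

definition ncoinc :: "nat \<Rightarrow> nat list \<Rightarrow> nat list \<Rightarrow> nat" where
  "ncoinc n b g = card {j. j < n \<and> b ! j = g ! j}"

text \<open>Decompositions are finite sets of (nonempty) intervals
  given by endpoint pairs, pairwise disjoint.\<close>
definition changes_sdepth ::
  "nat \<Rightarrow> nat \<Rightarrow> (nat list \<Rightarrow> nat list) \<Rightarrow> int \<Rightarrow> nat list \<Rightarrow> nat list \<Rightarrow> bool" where
  "changes_sdepth n n' \<phi> l g g' \<longleftrightarrow>
     mono_map n n' \<phi> \<and> length g = n \<and> length g' = n' \<and>
     vle (\<phi> g) g' \<and>
     (\<forall>a' b'. length a' = n' \<longrightarrow> length b' = n' \<longrightarrow>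
        intv n' a' b' \<subseteq> intv n' (zerov n') g' \<longrightarrow>
        (\<exists>F :: (nat list \<times> nat list) set. finite F \<and>
           (\<forall>(a, b) \<in> F. length a = n \<and> length b = n \<and> vle a b) \<and>
           (\<forall>p \<in> F. \<forall>q \<in> F. p \<noteq> q \<longrightarrow>
               intv n (fst p) (snd p) \<inter> intv n (fst q) (snd q) = {}) \<and>
           {c \<in> intv n (zerov n) g. \<phi> c \<in> intv n' a' b'} =
             (\<Union>(a, b) \<in> F. intv n a b) \<and>
           (\<forall>(a, b) \<in> F. int (ncoinc n b g) \<ge> int (ncoinc n' b' g') + l)))"

definition prod_map :: "nat \<Rightarrow> (nat list \<Rightarrow> nat list) \<Rightarrow> (nat list \<Rightarrow> nat list) \<Rightarrow> nat list \<Rightarrow> nat list" where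
  "prod_map n1 \<phi>1 \<phi>2 c = \<phi>1 (take n1 c) @ \<phi>2 (drop n1 c)"

end

theory Submission
  imports Defs
begin

lemma vle_append: "length a1 = length b1 \<Longrightarrow> vle (a1@a2) (b1@b2) \<longleftrightarrow> vle a1 b1 \<and> vle a2 b2"
  unfolding vle_def by (simp add: list_all2_append)

lemma intv_append:
  assumes "length a1 = n1" "length b1 = n1"
  shows "(c \<in> intv (n1+n2) (a1@a2) (b1@b2)) =
    (length c = n1+n2 \<and> take n1 c \<in> intv n1 a1 b1 \<and> drop n1 c \<in> intv n2 a2 b2)"
proof (cases "length c = n1+n2")
  case True
  have c: "c = take n1 c @ drop n1 c" by simp
  have "vle (a1@a2) c = (vle a1 (take n1 c) \<and> vle a2 (drop n1 c))"
    using vle_append[of a1 "take n1 c" a2 "drop n1 c"] assms True c by simp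
  moreover have "vle c (b1@b2) = (vle (take n1 c) b1 \<and> vle (drop n1 c) b2)"
    using vle_append[of "take n1 c" b1 "drop n1 c" b2] assms True c by simp
  ultimately show ?thesis using True by (auto simp: intv_def)
qed (auto simp: intv_def)

lemma zerov_add: "zerov (n1+n2) = zerov n1 @ zerov n2"
  by (simp add: zerov_def replicate_add)

lemma ncoinc_append:
  assumes "length b1 = n1" "length g1 = n1"
  shows "ncoinc (n1+n2) (b1@b2) (g1@g2) = ncoinc n1 b1 g1 + ncoinc n2 b2 g2"
proof -
  have "{j. j < n1+n2 \<and> (b1@b2) ! j = (g1@g2) ! j} =
        {j. j < n1 \<and> b1 ! j = g1 ! j} \<union> (\<lambda>j. j + n1) ` {j. j < n2 \<and> b2 ! j = g2 ! j}"
    (is "?L = ?A \<union> ?B")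
  proof (rule set_eqI)
    fix j
    show "j \<in> ?L \<longleftrightarrow> j \<in> ?A \<union> ?B"
    proof (cases "j < n1")
      case True then show ?thesis using assms by (auto simp: nth_append)
    next
      case False
      then have "j \<in> ?B \<longleftrightarrow> j - n1 < n2 \<and> b2 ! (j-n1) = g2 ! (j-n1)"
        by (auto simp: image_iff intro: exI[of _ "j - n1"])
      then show ?thesis using False assms by (auto simp: nth_append)
    qed
  qed
  moreover have "?A \<inter> ?B = {}" by auto
  moreover have "card ?B = card {j. j < n2 \<and> b2 ! j = g2 ! j}"
    by (rule card_image) (auto simp: inj_on_def)
  ultimately show ?thesis unfolding ncoinc_def
    by (simp add: card_Un_disjoint)
qed

theorem lemma3p4:
  fixes n1 n1' n2 n2' :: nat and \<phi>1 \<phi>2 :: "nat list \<Rightarrow> nat list"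
    and l1 l2 :: int and g1 g1' g2 g2' :: "nat list"
  assumes "changes_sdepth n1 n1' \<phi>1 l1 g1 g1'"
    and "changes_sdepth n2 n2' \<phi>2 l2 g2 g2'"
  shows "changes_sdepth (n1 + n2) (n1' + n2') (prod_map n1 \<phi>1 \<phi>2) (l1 + l2)
           (g1 @ g2) (g1' @ g2')"
proof -
  note A1 = assms(1)[unfolded changes_sdepth_def]
  note A2 = assms(2)[unfolded changes_sdepth_def]
  from A1 have m1: "mono_map n1 n1' \<phi>1" and lg1: "length g1 = n1" "length g1' = n1'"
    and v1: "vle (\<phi>1 g1) g1'" by auto
  from A2 have m2: "mono_map n2 n2' \<phi>2" and lg2: "length g2 = n2" "length g2' = n2'"
    and v2: "vle (\<phi>2 g2) g2'" by auto
  from A1 have D1a: "\<forall>a' b'. length a' = n1' \<longrightarrow> length b' = n1' \<longrightarrow>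
        intv n1' a' b' \<subseteq> intv n1' (zerov n1') g1' \<longrightarrow>
        (\<exists>F :: (nat list \<times> nat list) set. finite F \<and>
           (\<forall>(a, b) \<in> F. length a = n1 \<and> length b = n1 \<and> vle a b) \<and>
           (\<forall>p \<in> F. \<forall>q \<in> F. p \<noteq> q \<longrightarrow>
               intv n1 (fst p) (snd p) \<inter> intv n1 (fst q) (snd q) = {}) \<and>
           {c \<in> intv n1 (zerov n1) g1. \<phi>1 c \<in> intv n1' a' b'} =
             (\<Union>(a, b) \<in> F. intv n1 a b) \<and>
           (\<forall>(a, b) \<in> F. int (ncoinc n1 b g1) \<ge> int (ncoinc n1' b' g1') + l1))"
    by (elim conjE) assumption
  note D1 = D1a[rule_format]
  from A2 have D2a: "\<forall>a' b'. length a' = n2' \<longrightarrow> length b' = n2' \<longrightarrow>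
        intv n2' a' b' \<subseteq> intv n2' (zerov n2') g2' \<longrightarrow>
        (\<exists>F :: (nat list \<times> nat list) set. finite F \<and>
           (\<forall>(a, b) \<in> F. length a = n2 \<and> length b = n2 \<and> vle a b) \<and>
           (\<forall>p \<in> F. \<forall>q \<in> F. p \<noteq> q \<longrightarrow>
               intv n2 (fst p) (snd p) \<inter> intv n2 (fst q) (snd q) = {}) \<and>
           {c \<in> intv n2 (zerov n2) g2. \<phi>2 c \<in> intv n2' a' b'} =
             (\<Union>(a, b) \<in> F. intv n2 a b) \<and>
           (\<forall>(a, b) \<in> F. int (ncoinc n2 b g2) \<ge> int (ncoinc n2' b' g2') + l2))"
    by (elim conjE) assumption
  note D2 = D2a[rule_format]
  have len1: "\<And>a. length a = n1 \<Longrightarrow> length (\<phi>1 a) = n1'" using m1 by (simp add: mono_map_def)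
  have len2: "\<And>a. length a = n2 \<Longrightarrow> length (\<phi>2 a) = n2'" using m2 by (simp add: mono_map_def)
  let ?P = "prod_map n1 \<phi>1 \<phi>2"
  have mono: "mono_map (n1+n2) (n1'+n2') ?P"
    unfolding mono_map_def
  proof (intro conjI allI impI)
    fix a :: "nat list" assume "length a = n1 + n2"
    then show "length (?P a) = n1' + n2'" by (simp add: prod_map_def len1 len2)
  next
    fix a b :: "nat list" assume la: "length a = n1 + n2" and lb: "length b = n1 + n2" and v: "vle a b"
    have "vle (take n1 a) (take n1 b)" "vle (drop n1 a) (drop n1 b)"
      using v unfolding vle_def by (auto intro: list_all2_takeI list_all2_dropI)
    then have "vle (\<phi>1 (take n1 a)) (\<phi>1 (take n1 b))" "vle (\<phi>2 (drop n1 a)) (\<phi>2 (drop n1 b))"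
      using m1 m2 la lb unfolding mono_map_def by auto
    then show "vle (?P a) (?P b)" unfolding prod_map_def
      using vle_append[of "\<phi>1 (take n1 a)" "\<phi>1 (take n1 b)"] la lb len1 by simp
  qed
  have vg: "vle (?P (g1@g2)) (g1'@g2')"
    unfolding prod_map_def using lg1 lg2 v1 v2 len1 vle_append by simp
  have main: "\<exists>F :: (nat list \<times> nat list) set. finite F \<and>
           (\<forall>(a, b) \<in> F. length a = n1+n2 \<and> length b = n1+n2 \<and> vle a b) \<and>
           (\<forall>p \<in> F. \<forall>q \<in> F. p \<noteq> q \<longrightarrow>
               intv (n1+n2) (fst p) (snd p) \<inter> intv (n1+n2) (fst q) (snd q) = {}) \<and>
           {c \<in> intv (n1+n2) (zerov (n1+n2)) (g1@g2). ?P c \<in> intv (n1'+n2') a' b'} =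
             (\<Union>(a, b) \<in> F. intv (n1+n2) a b) \<and>
           (\<forall>(a, b) \<in> F. int (ncoinc (n1+n2) b (g1@g2)) \<ge> int (ncoinc (n1'+n2') b' (g1'@g2')) + (l1+l2))"
    if la': "length a' = n1'+n2'" and lb': "length b' = n1'+n2'"
      and sub: "intv (n1'+n2') a' b' \<subseteq> intv (n1'+n2') (zerov (n1'+n2')) (g1'@g2')" for a' b'
  proof (cases "intv (n1'+n2') a' b' = {}")
    case True
    then show ?thesis by (intro exI[of _ "{}"]) auto
  next
    case False
    then obtain x where x: "x \<in> intv (n1'+n2') a' b'" by blast
    define a1' where "a1' = take n1' a'"
    define a2' where "a2' = drop n1' a'"
    define b1' where "b1' = take n1' b'"
    define b2' where "b2' = drop n1' b'"
    have ae: "a' = a1' @ a2'" and be: "b' = b1' @ b2'" by (simp_all add: a1'_def a2'_def b1'_def b2'_def)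
    have la1: "length a1' = n1'" "length b1' = n1'" "length a2' = n2'" "length b2' = n2'"
      using la' lb' by (simp_all add: a1'_def a2'_def b1'_def b2'_def)
    have IA: "\<And>c. (c \<in> intv (n1'+n2') a' b') = (length c = n1'+n2' \<and> take n1' c \<in> intv n1' a1' b1' \<and> drop n1' c \<in> intv n2' a2' b2')"
      using intv_append[OF la1(1,2)] ae be by simp
    have IZ: "\<And>c. (c \<in> intv (n1'+n2') (zerov (n1'+n2')) (g1'@g2')) = (length c = n1'+n2' \<and> take n1' c \<in> intv n1' (zerov n1') g1' \<and> drop n1' c \<in> intv n2' (zerov n2') g2')"
      using intv_append[of "zerov n1'" n1' g1' _ n2' "zerov n2'" g2'] lg1 unfolding zerov_add by (simp add: zerov_def)
    have xs: "take n1' x \<in> intv n1' a1' b1'" "drop n1' x \<in> intv n2' a2' b2'" "length x = n1'+n2'"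
      using x IA by auto
    have s1: "intv n1' a1' b1' \<subseteq> intv n1' (zerov n1') g1'"
    proof
      fix y assume y: "y \<in> intv n1' a1' b1'"
      then have ly: "length y = n1'" by (simp add: intv_def)
      have "y @ drop n1' x \<in> intv (n1'+n2') a' b'" using IA ly y xs by simp
      then have "y @ drop n1' x \<in> intv (n1'+n2') (zerov (n1'+n2')) (g1'@g2')" using sub by blast
      then show "y \<in> intv n1' (zerov n1') g1'" unfolding IZ using ly by simp
    qed
    have s2: "intv n2' a2' b2' \<subseteq> intv n2' (zerov n2') g2'"
    proof
      fix y assume y: "y \<in> intv n2' a2' b2'"
      then have ly: "length y = n2'" by (simp add: intv_def)
      have lt: "length (take n1' x) = n1'" using xs by simp
      have "take n1' x @ y \<in> intv (n1'+n2') a' b'" using IA ly y xs lt by simp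
      then have "take n1' x @ y \<in> intv (n1'+n2') (zerov (n1'+n2')) (g1'@g2')" using sub by blast
      then show "y \<in> intv n2' (zerov n2') g2'" unfolding IZ using ly lt xs(3) by simp
    qed
    obtain F1 where F1: "finite F1" "\<forall>(a, b) \<in> F1. length a = n1 \<and> length b = n1 \<and> vle a b"
      "\<forall>p \<in> F1. \<forall>q \<in> F1. p \<noteq> q \<longrightarrow> intv n1 (fst p) (snd p) \<inter> intv n1 (fst q) (snd q) = {}"
      "{c \<in> intv n1 (zerov n1) g1. \<phi>1 c \<in> intv n1' a1' b1'} = (\<Union>(a, b) \<in> F1. intv n1 a b)"
      "\<forall>(a, b) \<in> F1. int (ncoinc n1 b g1) \<ge> int (ncoinc n1' b1' g1') + l1"
      using D1[OF la1(1,2) s1] by (elim exE conjE) (rule that; assumption)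
    obtain F2 where F2: "finite F2" "\<forall>(a, b) \<in> F2. length a = n2 \<and> length b = n2 \<and> vle a b"
      "\<forall>p \<in> F2. \<forall>q \<in> F2. p \<noteq> q \<longrightarrow> intv n2 (fst p) (snd p) \<inter> intv n2 (fst q) (snd q) = {}"
      "{c \<in> intv n2 (zerov n2) g2. \<phi>2 c \<in> intv n2' a2' b2'} = (\<Union>(a, b) \<in> F2. intv n2 a b)"
      "\<forall>(a, b) \<in> F2. int (ncoinc n2 b g2) \<ge> int (ncoinc n2' b2' g2') + l2"
      using D2[OF la1(3,4) s2] by (elim exE conjE) (rule that; assumption)
    define cmb where "cmb = (\<lambda>(p::nat list \<times> nat list, q::nat list \<times> nat list). (fst p @ fst q, snd p @ snd q))"
    define F where "F = cmb ` (F1 \<times> F2)"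
    have IF: "\<And>p q c. p \<in> F1 \<Longrightarrow> q \<in> F2 \<Longrightarrow> (c \<in> intv (n1+n2) (fst p @ fst q) (snd p @ snd q)) =
       (length c = n1+n2 \<and> take n1 c \<in> intv n1 (fst p) (snd p) \<and> drop n1 c \<in> intv n2 (fst q) (snd q))"
      using F1(2) by (intro intv_append) auto
    have f: "finite F" using F1(1) F2(1) by (simp add: F_def)
    have p2: "\<forall>(a, b) \<in> F. length a = n1+n2 \<and> length b = n1+n2 \<and> vle a b"
    proof
      fix x assume "x \<in> F"
      then obtain a1 b1 a2 b2 where pq: "(a1,b1) \<in> F1" "(a2,b2) \<in> F2" "x = (a1 @ a2, b1 @ b2)"
        by (auto simp: F_def cmb_def)
      have "length a1 = n1 \<and> length b1 = n1 \<and> vle a1 b1" using F1(2) pq(1) by auto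
      moreover have "length a2 = n2 \<and> length b2 = n2 \<and> vle a2 b2" using F2(2) pq(2) by auto
      ultimately show "case x of (a, b) \<Rightarrow> length a = n1+n2 \<and> length b = n1+n2 \<and> vle a b"
        using pq(3) vle_append[of a1 b1 a2 b2] by simp
    qed
    have p3: "\<forall>p \<in> F. \<forall>q \<in> F. p \<noteq> q \<longrightarrow>
               intv (n1+n2) (fst p) (snd p) \<inter> intv (n1+n2) (fst q) (snd q) = {}"
    proof (intro ballI impI)
      fix p q assume "p \<in> F" "q \<in> F" "p \<noteq> q"
      then obtain p1 p2 q1 q2 where pq: "p1 \<in> F1" "p2 \<in> F2" "q1 \<in> F1" "q2 \<in> F2"
        "p = cmb (p1,p2)" "q = cmb (q1,q2)" by (auto simp: F_def)
      with \<open>p \<noteq> q\<close> have ne: "p1 \<noteq> q1 \<or> p2 \<noteq> q2" by auto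
      show "intv (n1+n2) (fst p) (snd p) \<inter> intv (n1+n2) (fst q) (snd q) = {}"
      proof (rule ccontr)
        assume "\<not> ?thesis"
        then obtain c where "c \<in> intv (n1+n2) (fst p) (snd p)" "c \<in> intv (n1+n2) (fst q) (snd q)" by blast
        then have "take n1 c \<in> intv n1 (fst p1) (snd p1)" "drop n1 c \<in> intv n2 (fst p2) (snd p2)"
          "take n1 c \<in> intv n1 (fst q1) (snd q1)" "drop n1 c \<in> intv n2 (fst q2) (snd q2)"
          using IF[OF pq(1,2)] IF[OF pq(3,4)] pq(5,6) by (auto simp: cmb_def)
        then show False
        proof -
          assume h: "take n1 c \<in> intv n1 (fst p1) (snd p1)" "drop n1 c \<in> intv n2 (fst p2) (snd p2)"
            "take n1 c \<in> intv n1 (fst q1) (snd q1)" "drop n1 c \<in> intv n2 (fst q2) (snd q2)"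
          show False
          proof (cases "p1 \<noteq> q1")
            case True
            then have "intv n1 (fst p1) (snd p1) \<inter> intv n1 (fst q1) (snd q1) = {}"
              using F1(3) pq(1,3) by simp
            then show False using h(1,3) by blast
          next
            case False
            then have "p2 \<noteq> q2" using ne by simp
            then have "intv n2 (fst p2) (snd p2) \<inter> intv n2 (fst q2) (snd q2) = {}"
              using F2(3) pq(2,4) by simp
            then show False using h(2,4) by blast
          qed
        qed
      qed
    qed
    have p4: "{c \<in> intv (n1+n2) (zerov (n1+n2)) (g1@g2). ?P c \<in> intv (n1'+n2') a' b'} =
             (\<Union>(a, b) \<in> F. intv (n1+n2) a b)"
    proof (rule set_eqI)
      fix c
      have IG: "(c \<in> intv (n1+n2) (zerov (n1+n2)) (g1@g2)) = (length c = n1+n2 \<and> take n1 c \<in> intv n1 (zerov n1) g1 \<and> drop n1 c \<in> intv n2 (zerov n2) g2)"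
        using intv_append[of "zerov n1" n1 g1 c n2 "zerov n2" g2] lg1 unfolding zerov_add by (simp add: zerov_def)
      show "c \<in> {c \<in> intv (n1+n2) (zerov (n1+n2)) (g1@g2). ?P c \<in> intv (n1'+n2') a' b'} \<longleftrightarrow>
            c \<in> (\<Union>(a, b) \<in> F. intv (n1+n2) a b)"
      proof
        assume "c \<in> {c \<in> intv (n1+n2) (zerov (n1+n2)) (g1@g2). ?P c \<in> intv (n1'+n2') a' b'}"
        then have c1: "length c = n1+n2" "take n1 c \<in> intv n1 (zerov n1) g1" "drop n1 c \<in> intv n2 (zerov n2) g2"
          and c2: "?P c \<in> intv (n1'+n2') a' b'" using IG by auto
        have lt: "length (\<phi>1 (take n1 c)) = n1'" using c1 len1 by simp
        have "\<phi>1 (take n1 c) \<in> intv n1' a1' b1'" "\<phi>2 (drop n1 c) \<in> intv n2' a2' b2'"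
          using c2 IA lt unfolding prod_map_def by auto
        then have "take n1 c \<in> {c \<in> intv n1 (zerov n1) g1. \<phi>1 c \<in> intv n1' a1' b1'}"
            "drop n1 c \<in> {c \<in> intv n2 (zerov n2) g2. \<phi>2 c \<in> intv n2' a2' b2'}"
          using c1 by simp_all
        then have "take n1 c \<in> (\<Union>(a, b) \<in> F1. intv n1 a b)" "drop n1 c \<in> (\<Union>(a, b) \<in> F2. intv n2 a b)"
          unfolding F1(4) F2(4) .
        then obtain p q where pq: "p \<in> F1" "q \<in> F2" "take n1 c \<in> intv n1 (fst p) (snd p)"
           "drop n1 c \<in> intv n2 (fst q) (snd q)" by auto
        then have "c \<in> intv (n1+n2) (fst p @ fst q) (snd p @ snd q)" using IF c1 by blast
        moreover have "cmb (p,q) \<in> F" using pq by (auto simp: F_def)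
        ultimately show "c \<in> (\<Union>(a, b) \<in> F. intv (n1+n2) a b)"
          by (auto simp: cmb_def intro!: bexI[of _ "cmb (p,q)"])
      next
        assume "c \<in> (\<Union>(a, b) \<in> F. intv (n1+n2) a b)"
        then obtain p q where pq: "p \<in> F1" "q \<in> F2" "c \<in> intv (n1+n2) (fst p @ fst q) (snd p @ snd q)"
          by (auto simp: F_def cmb_def)
        then have c1: "length c = n1+n2" "take n1 c \<in> intv n1 (fst p) (snd p)" "drop n1 c \<in> intv n2 (fst q) (snd q)"
          using IF by blast+
        have "take n1 c \<in> (\<Union>(a, b) \<in> F1. intv n1 a b)" "drop n1 c \<in> (\<Union>(a, b) \<in> F2. intv n2 a b)"
           apply (rule UN_I[OF pq(1)]) using c1 apply (cases p, simp)
          apply (rule UN_I[OF pq(2)]) using c1 by (cases q, simp)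
        then have "take n1 c \<in> {c \<in> intv n1 (zerov n1) g1. \<phi>1 c \<in> intv n1' a1' b1'}"
            "drop n1 c \<in> {c \<in> intv n2 (zerov n2) g2. \<phi>2 c \<in> intv n2' a2' b2'}"
          unfolding F1(4) F2(4) .
        then have "take n1 c \<in> intv n1 (zerov n1) g1" "\<phi>1 (take n1 c) \<in> intv n1' a1' b1'"
          "drop n1 c \<in> intv n2 (zerov n2) g2" "\<phi>2 (drop n1 c) \<in> intv n2' a2' b2'"
          by simp_all
        moreover have lt: "length (\<phi>1 (take n1 c)) = n1'" "length (\<phi>2 (drop n1 c)) = n2'"
          using c1 len1 len2 by simp_all
        ultimately show "c \<in> {c \<in> intv (n1+n2) (zerov (n1+n2)) (g1@g2). ?P c \<in> intv (n1'+n2') a' b'}"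
          using IG IA c1 unfolding prod_map_def by simp
      qed
    qed
    have nc': "ncoinc (n1'+n2') b' (g1'@g2') = ncoinc n1' b1' g1' + ncoinc n2' b2' g2'"
      using ncoinc_append[OF la1(2) lg1(2)] be by simp
    have p5: "\<forall>(a, b) \<in> F. int (ncoinc (n1+n2) b (g1@g2)) \<ge> int (ncoinc (n1'+n2') b' (g1'@g2')) + (l1+l2)"
    proof
      fix x assume "x \<in> F"
      then obtain p q where pq: "p \<in> F1" "q \<in> F2" "x = (fst p @ fst q, snd p @ snd q)"
        by (auto simp: F_def cmb_def)
      have lp: "length (snd p) = n1" using F1(2) pq(1) by auto
      have "ncoinc (n1+n2) (snd p @ snd q) (g1@g2) = ncoinc n1 (snd p) g1 + ncoinc n2 (snd q) g2"
        using ncoinc_append[OF lp lg1(1)] .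
      moreover have "int (ncoinc n1 (snd p) g1) \<ge> int (ncoinc n1' b1' g1') + l1"
        using F1(5) pq(1) by (cases p) auto
      moreover have "int (ncoinc n2 (snd q) g2) \<ge> int (ncoinc n2' b2' g2') + l2"
        using F2(5) pq(2) by (cases q) auto
      ultimately show "case x of (a, b) \<Rightarrow> int (ncoinc (n1+n2) b (g1@g2)) \<ge> int (ncoinc (n1'+n2') b' (g1'@g2')) + (l1+l2)"
        using pq(3) nc' by simp
    qed
    show ?thesis by (intro exI[of _ F] conjI f p2 p3 p4 p5)
  qed
  show ?thesis unfolding changes_sdepth_def
  proof (intro conjI allI impI)
    fix a' b' :: "nat list"
    assume "length a' = n1' + n2'" "length b' = n1' + n2'"
      "intv (n1' + n2') a' b' \<subseteq> intv (n1' + n2') (zerov (n1' + n2')) (g1' @ g2')"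
    then show "\<exists>F :: (nat list \<times> nat list) set. finite F \<and>
           (\<forall>(a, b) \<in> F. length a = n1+n2 \<and> length b = n1+n2 \<and> vle a b) \<and>
           (\<forall>p \<in> F. \<forall>q \<in> F. p \<noteq> q \<longrightarrow>
               intv (n1+n2) (fst p) (snd p) \<inter> intv (n1+n2) (fst q) (snd q) = {}) \<and>
           {c \<in> intv (n1+n2) (zerov (n1+n2)) (g1@g2). ?P c \<in> intv (n1'+n2') a' b'} =
             (\<Union>(a, b) \<in> F. intv (n1+n2) a b) \<and>
           (\<forall>(a, b) \<in> F. int (ncoinc (n1+n2) b (g1@g2)) \<ge> int (ncoinc (n1'+n2') b' (g1'@g2')) + (l1+l2))"
      by (rule main)
  qed (use mono vg lg1 lg2 in simp_all)
qed

end
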